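(* The canonical collection $\mathcal{S}$ satisfies $$\sum_{S\in\mathcal{S}}c(T_S)\ \le\ \mathrm{val}(\mathcal{S})+2\cdot\mathrm{excess}(\mathrm{OPT}).$$
   Context: Steiner Forest: finite undirected graph $G=(V,E)$ with non-negative edge costs $(c_e)_{e\in E}$ and a set $\mathcal{D}$ of demand pairs $\{a,b\}\subseteq V$ (partners); feasible solutions are $F\subseteq E$ with each demand pair in one connected component of $(V,F)$, of cost $c(F)=\sum_{e\in F}c_e$. $\mathrm{OPT}$ is a fixed optimal solution that is inclusionwise minimal (no cost-$0$ edge can be omitted keeping feasibility). For $U\subseteq V$, $\delta(U)$ is the set of edges with exactly one endpoint in $U$; $U$ separates $S$ if $S\cap U\ne\emptyset$ and $S\setminus U\ne\emptyset$. The $\varepsilon$-extended moat-growing algorithm (fixed $\varepsilon\ge0$): time $t$ increases continuously from $0$ at unit rate; it maintains tight edges $F$ (initially empty), duals $y_S(t)\ge0$ (initially $0$), and budgets of components (initially $0$). $\mathcal{C}^t$ is the family of vertex sets of connected components of $(V,F)$. A component is demand-active if it contains a vertex not connected in $(V,F)$ to some partner; budget-active if not demand-active but with positive budget; active if either; $\mathcal{A}^t$ is the set of active components. Each $y_S$, $S\in\mathcal{A}^t$, grows at unit rate; budgets of demand-active components grow at rate $\varepsilon$ and of budget-active ones decrease at rate $1$; an edge $e$ with $\sum_{S:e\in\delta(S)}y_S(t)=c_e$ becomes tight and is added to $F$; merging components add budgets. $y_S=y_S(\infty)$; $\mathcal{U}_{\mathrm{sep}}$ is the set of $U\in\mathrm{supp}(y)$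 separating some demand pair; $\mathrm{excess}(F)=c(F)-\sum_{U\in\mathcal{U}_{\mathrm{sep}}}y_U$. The deactivation time $\tau_v$ of $v$ is the largest $t$ such that for all $s<t$, $v$ lies in a set of $\mathcal{A}^s$. Vertices $u,v$ are actively connected if for some $t$ they lie in a common set of $\mathcal{C}^t$ and $\tau_u,\tau_v\ge t$ (an equivalence relation). For each $U\in\mathcal{U}_{\mathrm{sep}}$ fix a demand pair $\varphi(U)$ separated by $U$. For a demand pair $d$, $\mathrm{val}(d)=\sum_{U:\varphi(U)=d}y_U$. A demand pair $\{a,b\}$ is satisfied by a set $S$ if $\{a,b\}\subseteq S$, and by a collection if by some member; $\mathrm{val}(\mathcal{S})$ is the sum of $\mathrm{val}(d)$ over demand pairs $d$ satisfied by $\mathcal{S}$. Canonical collection: start with a family $\mathcal{F}$ in which each tree (connected component) of $\mathrm{OPT}$ is its own forest; for each $U\in\mathcal{U}_{\mathrm{sep}}$, merge all forests of $\mathcal{F}$ that connect some demand pair separated by $U$ into a single forest. For each $F\in\mathcal{F}$ let $r_F$ be a vertex of $F$ with maximum deactivation time; for each connected component $T$ of $F$, let $S$ be the set of vertices of $T$ actively connected to $r_F$; if $S\ne\emptyset$, add $S$ to $\mathcal{S}$ and let $T_S$ be the minimal subtree of $T$ connecting $S$. *)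

theory Defs
  imports Complex_Main
begin

text \<open>Vertices have type 'v, the vertex set is V; an edge is a 2-element subset of V.\<close>

definition erel :: "'v set set \<Rightarrow> ('v \<times> 'v) set" where
  "erel F = {(u, w). {u, w} \<in> F}"

definition conn :: "'v set set \<Rightarrow> 'v \<Rightarrow> 'v \<Rightarrow> bool" where
  "conn F u w \<longleftrightarrow> (u, w) \<in> (erel F)\<^sup>*"

definition comps :: "'v set \<Rightarrow> 'v set set \<Rightarrow> 'v set set" where
  "comps V F = (\<lambda>u. {w \<in> V. conn F u w}) ` V"

definition in_delta :: "'v set \<Rightarrow> 'v set \<Rightarrow> bool" where
  "in_delta U e \<longleftrightarrow> card (e \<inter> U) = 1"

definition separates :: "'v set \<Rightarrow> 'v set \<Rightarrow> bool" where
  "separates U S \<longleftrightarrow> S \<inter> U \<noteq> {} \<and> S - U \<noteq> {}"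

definition cost :: "('v set \<Rightarrow> real) \<Rightarrow> 'v set set \<Rightarrow> real" where
  "cost c F = (\<Sum>e\<in>F. c e)"

definition feasible :: "'v set \<Rightarrow> 'v set set \<Rightarrow> 'v set set \<Rightarrow> bool" where
  "feasible V D F \<longleftrightarrow> (\<forall>d\<in>D. \<exists>C\<in>comps V F. d \<subseteq> C)"

definition connects :: "'v set set \<Rightarrow> 'v set \<Rightarrow> bool" where
  "connects X S \<longleftrightarrow> (\<forall>u\<in>S. \<forall>w\<in>S. conn X u w)"

definition sf_instance :: "'v set \<Rightarrow> 'v set set \<Rightarrow> ('v set \<Rightarrow> real) \<Rightarrow> 'v set set \<Rightarrow> bool" where
  "sf_instance V E c D \<longleftrightarrow> finite V
     \<and> (\<forall>e\<in>E. e \<subseteq> V \<and> card e = 2 \<and> c e \<ge> 0)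
     \<and> (\<forall>d\<in>D. d \<subseteq> V \<and> card d = 2)"

definition min_opt :: "'v set \<Rightarrow> 'v set set \<Rightarrow> ('v set \<Rightarrow> real) \<Rightarrow> 'v set set \<Rightarrow> 'v set set \<Rightarrow> bool" where
  "min_opt V E c D OPT \<longleftrightarrow> OPT \<subseteq> E \<and> feasible V D OPT
     \<and> (\<forall>F. F \<subseteq> E \<and> feasible V D F \<longrightarrow> cost c OPT \<le> cost c F)
     \<and> (\<forall>e\<in>OPT. \<not> feasible V D (OPT - {e}))"

section \<open>The epsilon-extended moat-growing algorithm (event-driven description)\<close>

text \<open>A state: (tight edges F, duals y, budgets b, time t). Budgets are indexed by vertex sets
  (only the values at current components matter).\<close>
type_synonym 'v state = "'v set set \<times> ('v set \<Rightarrow> real) \<times> ('v set \<Rightarrow> real) \<times> real"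

definition sF :: "'v state \<Rightarrow> 'v set set" where "sF s = fst s"
definition sy :: "'v state \<Rightarrow> 'v set \<Rightarrow> real" where "sy s = fst (snd s)"
definition sb :: "'v state \<Rightarrow> 'v set \<Rightarrow> real" where "sb s = fst (snd (snd s))"
definition st :: "'v state \<Rightarrow> real" where "st s = snd (snd (snd s))"

definition dact :: "'v set set \<Rightarrow> 'v set \<Rightarrow> bool" where
  "dact D C \<longleftrightarrow> (\<exists>v\<in>C. \<exists>d\<in>D. v \<in> d \<and> \<not> d \<subseteq> C)"

definition bact :: "'v set set \<Rightarrow> ('v set \<Rightarrow> real) \<Rightarrow> 'v set \<Rightarrow> bool" where
  "bact D b C \<longleftrightarrow> \<not> dact D C \<and> b C > 0"

definition active :: "'v set \<Rightarrow> 'v set set \<Rightarrow> 'v set set \<Rightarrow> ('v set \<Rightarrow> real) \<Rightarrow> 'v set set" where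
  "active V D F b = {C \<in> comps V F. dact D C \<or> bact D b C}"

definition load :: "'v set \<Rightarrow> ('v set \<Rightarrow> real) \<Rightarrow> 'v set \<Rightarrow> real" where
  "load V y e = (\<Sum>S\<in>{S. S \<subseteq> V \<and> in_delta S e}. y S)"

definition crossing :: "'v set \<Rightarrow> 'v set set \<Rightarrow> 'v set \<Rightarrow> bool" where
  "crossing V F e \<longleftrightarrow> (\<exists>C\<in>comps V F. in_delta C e)"

text \<open>every tight edge has already been added (lies inside a component)\<close>
definition closed :: "'v set \<Rightarrow> 'v set set \<Rightarrow> ('v set \<Rightarrow> real) \<Rightarrow> 'v set set \<Rightarrow> ('v set \<Rightarrow> real) \<Rightarrow> bool" where
  "closed V E c F y \<longleftrightarrow> (\<forall>e\<in>E. load V y e = c e \<longrightarrow> \<not> crossing V F e)"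

definition merge_step :: "'v set \<Rightarrow> 'v set set \<Rightarrow> ('v set \<Rightarrow> real) \<Rightarrow> 'v state \<Rightarrow> 'v state \<Rightarrow> bool" where
  "merge_step V E c s s' \<longleftrightarrow> st s' = st s \<and> sy s' = sy s \<and>
     (\<exists>u w. {u, w} \<in> E \<and> load V (sy s) {u, w} = c {u, w} \<and> \<not> conn (sF s) u w
        \<and> sF s' = insert {u, w} (sF s)
        \<and> sb s' = (sb s)({x \<in> V. conn (sF s) u x} \<union> {x \<in> V. conn (sF s) w x} :=
                      sb s {x \<in> V. conn (sF s) u x} + sb s {x \<in> V. conn (sF s) w x}))"

text \<open>continuous growth phase of length Delta > 0 until the next event
  (an edge becoming tight or a budget reaching 0)\<close>
definition grow_step :: "'v set \<Rightarrow> 'v set set \<Rightarrow> ('v set \<Rightarrow> real) \<Rightarrow> 'v set set \<Rightarrow> real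
     \<Rightarrow> 'v state \<Rightarrow> 'v state \<Rightarrow> bool" where
  "grow_step V E c D \<epsilon> s s' \<longleftrightarrow>
     (let F = sF s; y = sy s; b = sb s; A = active V D F b in
      closed V E c F y \<and> A \<noteq> {} \<and> sF s' = F \<and>
      (\<exists>\<Delta>>0. st s' = st s + \<Delta>
        \<and> sy s' = (\<lambda>S. if S \<in> A then y S + \<Delta> else y S)
        \<and> sb s' = (\<lambda>C. if C \<in> comps V F \<and> dact D C then b C + \<epsilon> * \<Delta>
                       else if C \<in> comps V F \<and> bact D b C then b C - \<Delta> else b C)
        \<and> (\<forall>e\<in>E. load V (sy s') e \<le> c e)
        \<and> (\<forall>C\<in>comps V F. bact D b C \<longrightarrow> sb s' C \<ge> 0)
        \<and> ((\<exists>e\<in>E. crossing V F e \<and> load V (sy s') e = c e)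
           \<or> (\<exists>C\<in>comps V F. bact D b C \<and> sb s' C = 0))))"

definition moat_run :: "'v set \<Rightarrow> 'v set set \<Rightarrow> ('v set \<Rightarrow> real) \<Rightarrow> 'v set set \<Rightarrow> real
     \<Rightarrow> 'v state list \<Rightarrow> bool" where
  "moat_run V E c D \<epsilon> R \<longleftrightarrow> R \<noteq> [] \<and> R ! 0 = ({}, (\<lambda>_. 0), (\<lambda>_. 0), 0)
     \<and> (\<forall>i. Suc i < length R \<longrightarrow>
            merge_step V E c (R ! i) (R ! Suc i) \<or> grow_step V E c D \<epsilon> (R ! i) (R ! Suc i))
     \<and> closed V E c (sF (last R)) (sy (last R))
     \<and> active V D (sF (last R)) (sb (last R)) = {}"

text \<open>The state current at time s (the last state with time \<le> s; right-continuous).\<close>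
definition idx :: "'v state list \<Rightarrow> real \<Rightarrow> nat" where
  "idx R s = (GREATEST i. i < length R \<and> st (R ! i) \<le> s)"

definition comps_at :: "'v set \<Rightarrow> 'v state list \<Rightarrow> real \<Rightarrow> 'v set set" where
  "comps_at V R s = comps V (sF (R ! idx R s))"

definition act_at :: "'v set \<Rightarrow> 'v set set \<Rightarrow> 'v state list \<Rightarrow> real \<Rightarrow> 'v set set" where
  "act_at V D R s = active V D (sF (R ! idx R s)) (sb (R ! idx R s))"

definition tau :: "'v set \<Rightarrow> 'v set set \<Rightarrow> 'v state list \<Rightarrow> 'v \<Rightarrow> real" where
  "tau V D R v = Sup {t. 0 \<le> t \<and> (\<forall>s. 0 \<le> s \<and> s < t \<longrightarrow> (\<exists>C\<in>act_at V D R s. v \<in> C))}"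

definition act_conn :: "'v set \<Rightarrow> 'v set set \<Rightarrow> 'v state list \<Rightarrow> 'v \<Rightarrow> 'v \<Rightarrow> bool" where
  "act_conn V D R u v \<longleftrightarrow> (\<exists>t\<ge>0. (\<exists>C\<in>comps_at V R t. u \<in> C \<and> v \<in> C)
                               \<and> tau V D R u \<ge> t \<and> tau V D R v \<ge> t)"

text \<open>final duals y_S = y_S(infinity)\<close>
definition yfin :: "'v state list \<Rightarrow> 'v set \<Rightarrow> real" where
  "yfin R = sy (last R)"

definition Usep :: "'v set \<Rightarrow> 'v set set \<Rightarrow> ('v set \<Rightarrow> real) \<Rightarrow> 'v set set" where
  "Usep V D y = {U. U \<subseteq> V \<and> y U \<noteq> 0 \<and> (\<exists>d\<in>D. separates U d)}"

definition excess :: "'v set \<Rightarrow> 'v set set \<Rightarrow> ('v set \<Rightarrow> real) \<Rightarrow> ('v set \<Rightarrow> real)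
     \<Rightarrow> 'v set set \<Rightarrow> real" where
  "excess V D c y F = cost c F - (\<Sum>U\<in>Usep V D y. y U)"

definition val :: "'v set \<Rightarrow> 'v set set \<Rightarrow> ('v set \<Rightarrow> real) \<Rightarrow> ('v set \<Rightarrow> 'v set)
     \<Rightarrow> 'v set \<Rightarrow> real" where
  "val V D y \<phi> d = (\<Sum>U\<in>{U \<in> Usep V D y. \<phi> U = d}. y U)"

definition val_coll :: "'v set \<Rightarrow> 'v set set \<Rightarrow> ('v set \<Rightarrow> real) \<Rightarrow> ('v set \<Rightarrow> 'v set)
     \<Rightarrow> 'v set set \<Rightarrow> real" where
  "val_coll V D y \<phi> SS = (\<Sum>d\<in>{d \<in> D. \<exists>S\<in>SS. d \<subseteq> S}. val V D y \<phi> d)"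

text \<open>Forests of the canonical collection: classes of trees of OPT (vertex sets of components of
  (V,OPT)) under the equivalence generated by the merges for U in Usep.\<close>
definition merge_rel :: "'v set \<Rightarrow> 'v set set \<Rightarrow> ('v set \<Rightarrow> real) \<Rightarrow> 'v set set
     \<Rightarrow> ('v set \<times> 'v set) set" where
  "merge_rel V D y OPT = {(T1, T2). T1 \<in> comps V OPT \<and> T2 \<in> comps V OPT \<and>
      (\<exists>U\<in>Usep V D y. \<exists>d1\<in>D. \<exists>d2\<in>D. separates U d1 \<and> separates U d2 \<and> d1 \<subseteq> T1 \<and> d2 \<subseteq> T2)}"

definition forests :: "'v set \<Rightarrow> 'v set set \<Rightarrow> ('v set \<Rightarrow> real) \<Rightarrow> 'v set set \<Rightarrow> 'v set set set" where
  "forests V D y OPT = comps V OPT // ((merge_rel V D y OPT)\<^sup>*)"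

text \<open>Canonical collection, recorded as pairs (S, T) with T the tree (vertex set) containing S.\<close>
definition canon :: "'v set \<Rightarrow> 'v set set \<Rightarrow> 'v state list \<Rightarrow> 'v set set
     \<Rightarrow> ('v set set \<Rightarrow> 'v) \<Rightarrow> ('v set \<times> 'v set) set" where
  "canon V D R OPT r = {(S, T). \<exists>Fo\<in>forests V D (yfin R) OPT. T \<in> Fo \<and>
       S = {v \<in> T. act_conn V D R v (r Fo)} \<and> S \<noteq> {}}"

definition min_subtree :: "'v set set \<Rightarrow> 'v set \<Rightarrow> 'v set \<Rightarrow> 'v set set" where
  "min_subtree OPT T S = (THE X. X \<subseteq> {e \<in> OPT. e \<subseteq> T} \<and> connects X S
                               \<and> (\<forall>X'. X' \<subset> X \<longrightarrow> \<not> connects X' S))"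

end

theory Submission
  imports Defs
begin

lemma erel_iff: "(u, w) \<in> erel F \<longleftrightarrow> {u, w} \<in> F"
  by (simp add: erel_def)

lemma sym_erel: "sym (erel F)"
  by (auto simp: sym_def erel_def insert_commute)

lemma conn_refl[simp]: "conn F u u"
  by (simp add: conn_def)

lemma conn_sym: "conn F u w \<Longrightarrow> conn F w u"
  using sym_rtrancl[OF sym_erel, of F] unfolding sym_def conn_def by blast

lemma conn_trans: "conn F u v \<Longrightarrow> conn F v w \<Longrightarrow> conn F u w"
  unfolding conn_def by simp

lemma conn_edge: "{u, w} \<in> F \<Longrightarrow> conn F u w"
  unfolding conn_def by (simp add: erel_iff r_into_rtrancl)

lemma conn_mono: "F \<subseteq> F' \<Longrightarrow> conn F u w \<Longrightarrow> conn F' u w"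
  unfolding conn_def erel_def
  by (erule rtrancl_mono[THEN subsetD, rotated]) auto

lemma conn_induct[consumes 1, case_names refl step]:
  assumes "conn F a b" "P a"
    "\<And>y z. conn F a y \<Longrightarrow> {y, z} \<in> F \<Longrightarrow> P y \<Longrightarrow> P z"
  shows "P b"
  using assms(1) unfolding conn_def
proof (induction rule: rtrancl_induct)
  case base then show ?case using assms(2) by simp
next
  case (step y z) then show ?case using assms(3)[of y z] by (simp add: conn_def erel_iff)
qed

lemma comps_iff: "C \<in> comps V F \<longleftrightarrow> (\<exists>x\<in>V. C = {w\<in>V. conn F x w})"
  by (auto simp: comps_def)

lemma comp_of_mem: "x \<in> V \<Longrightarrow> {w\<in>V. conn F x w} \<in> comps V F"
  by (auto simp: comps_def)

lemma comps_sub: "C \<in> comps V F \<Longrightarrow> C \<subseteq> V"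
  by (auto simp: comps_def)

lemma comp_closed: "C \<in> comps V F \<Longrightarrow> u \<in> C \<Longrightarrow> w \<in> V \<Longrightarrow> conn F u w \<Longrightarrow> w \<in> C"
  by (auto simp: comps_def intro: conn_trans)

lemma comp_conn: "C \<in> comps V F \<Longrightarrow> u \<in> C \<Longrightarrow> w \<in> C \<Longrightarrow> conn F u w"
  by (auto simp: comps_def intro: conn_trans conn_sym)

lemma comps_eq: assumes "C \<in> comps V F" "C' \<in> comps V F" "v \<in> C" "v \<in> C'" shows "C = C'"
proof -
  have a: "x \<in> C'" if "x \<in> C" for x
    using comp_conn[OF assms(1,3) that] comp_closed[OF assms(2,4)] comps_sub[OF assms(1)] that by blast
  have b: "x \<in> C" if "x \<in> C'" for x
    using comp_conn[OF assms(2,4) that] comp_closed[OF assms(1,3)] comps_sub[OF assms(2)] that by blast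
  show ?thesis using a b by blast
qed

lemma comps_mono_sub: assumes "F \<subseteq> F'" "C \<in> comps V F" "C' \<in> comps V F'" "v \<in> C" "v \<in> C'" shows "C \<subseteq> C'"
proof
  fix x assume "x \<in> C"
  then have "conn F v x" using comp_conn assms by metis
  then have "conn F' v x" using conn_mono assms(1) by metis
  moreover have "x \<in> V" using comps_sub assms \<open>x \<in> C\<close> by blast
  ultimately show "x \<in> C'" using comp_closed assms(3,5) by metis
qed

lemma conn_cross:
  assumes "conn F a b" "a \<in> W" "b \<notin> W"
  shows "\<exists>x y. {x, y} \<in> F \<and> x \<in> W \<and> y \<notin> W \<and> conn F a x"
proof -
  have "b \<in> W \<or> (\<exists>x y. {x, y} \<in> F \<and> x \<in> W \<and> y \<notin> W \<and> conn F a x)"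
    using assms(1)
  proof (induction rule: conn_induct)
    case refl then show ?case using assms(2) by simp
  next
    case (step y z) then show ?case by blast
  qed
  then show ?thesis using assms(3) by blast
qed

lemma conn_remove_edge:
  assumes "conn X u w"
  shows "conn (X - {{p, q}}) u w \<or> (conn (X - {{p, q}}) u p \<and> conn (X - {{p, q}}) q w)
       \<or> (conn (X - {{p, q}}) u q \<and> conn (X - {{p, q}}) p w)"
  using assms
proof (induction rule: conn_induct)
  case refl then show ?case by simp
next
  case (step y z)
  let ?Y = "X - {{p, q}}"
  show ?case
  proof (cases "{y, z} = {p, q}")
    case False
    then have "conn ?Y y z" using step by (intro conn_edge) auto
    have "conn ?Y u y \<or> (conn ?Y u p \<and> conn ?Y q y) \<or> (conn ?Y u q \<and> conn ?Y p y)"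
      using step(3) by simp
    then show ?thesis
    proof (elim disjE conjE)
      assume "conn ?Y u y" then show ?thesis using conn_trans[OF _ \<open>conn ?Y y z\<close>] by simp
    next
      assume "conn ?Y u p" "conn ?Y q y" then show ?thesis using conn_trans[OF _ \<open>conn ?Y y z\<close>] by simp
    next
      assume "conn ?Y u q" "conn ?Y p y" then show ?thesis using conn_trans[OF _ \<open>conn ?Y y z\<close>] by simp
    qed
  next
    case True
    then have "(y = p \<and> z = q) \<or> (y = q \<and> z = p)" by (simp add: doubleton_eq_iff)
    then show ?thesis
    proof
      assume a: "y = p \<and> z = q"
      show ?thesis using step(3)
      proof (elim disjE conjE)
        assume "conn ?Y u y" then show ?thesis using a by simp
      next
        assume "conn ?Y u p" "conn ?Y q y" then have "conn ?Y u q" using a conn_sym[of ?Y q y] conn_trans[of ?Y u p q] by simp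
        then show ?thesis using a by simp
      next
        assume "conn ?Y u q" "conn ?Y p y" then show ?thesis using a by simp
      qed
    next
      assume a: "y = q \<and> z = p"
      show ?thesis using step(3)
      proof (elim disjE conjE)
        assume "conn ?Y u y" then show ?thesis using a by simp
      next
        assume "conn ?Y u p" "conn ?Y q y" then show ?thesis using a by simp
      next
        assume "conn ?Y u q" "conn ?Y p y" then have "conn ?Y u p" using a conn_sym[of ?Y p y] conn_trans[of ?Y u q p] by simp
        then show ?thesis using a by simp
      qed
    qed
  qed
qed

lemma conn_side:
  assumes "conn Y u w" "\<And>x y. {x, y} \<in> Y \<Longrightarrow> x \<in> W \<Longrightarrow> y \<in> W"
  shows "u \<in> W \<longleftrightarrow> w \<in> W"
proof -
  have sy: "x \<in> W" if "{x, y} \<in> Y" "y \<in> W" for x y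
  proof -
    have "{y, x} \<in> Y" using that(1) by (simp add: insert_commute)
    then show "x \<in> W" using assms(2) that(2) by blast
  qed
  have "u \<in> W \<longleftrightarrow> w \<in> W" using assms(1)
  proof (induction rule: conn_induct)
    case refl then show ?case by simp
  next
    case (step y z)
    have "y \<in> W \<longleftrightarrow> z \<in> W" using assms(2)[OF step(2)] sy[OF step(2)] by blast
    then show ?case using step(3) by simp
  qed
  then show ?thesis .
qed

lemma conn_remove_bridge:
  assumes "conn X u w" "p \<in> W" "q \<notin> W"
    and cr: "\<And>x y. {x, y} \<in> X - {{p, q}} \<Longrightarrow> x \<in> W \<Longrightarrow> y \<in> W"
    and side: "u \<in> W \<longleftrightarrow> w \<in> W"
  shows "conn (X - {{p, q}}) u w"
proof -
  let ?Y = "X - {{p, q}}"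
  have s: "\<And>a b. conn ?Y a b \<Longrightarrow> a \<in> W \<longleftrightarrow> b \<in> W"
    using conn_side[of ?Y _ _ W] cr by blast
  have "\<not> (conn ?Y u p \<and> conn ?Y q w)"
  proof
    assume "conn ?Y u p \<and> conn ?Y q w"
    then have "u \<in> W" "w \<notin> W" using s[of u p] s[of q w] assms(2,3) by auto
    then show False using side by simp
  qed
  moreover have "\<not> (conn ?Y u q \<and> conn ?Y p w)"
  proof
    assume "conn ?Y u q \<and> conn ?Y p w"
    then have "u \<notin> W" "w \<in> W" using s[of u q] s[of p w] assms(2,3) by auto
    then show False using side by simp
  qed
  ultimately show ?thesis using conn_remove_edge[OF assms(1), of p q] by blast
qed

lemma card2_edge: "card e = 2 \<Longrightarrow> \<exists>p q. p \<noteq> q \<and> e = {p, q}"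
  by (auto simp: card_2_iff)

lemma bridge:
  assumes mo: "min_opt V E c D OPT" and eo: "{p, q} \<in> OPT"
  shows "\<not> conn (OPT - {{p, q}}) p q"
proof
  let ?Y = "OPT - {{p, q}}"
  assume pq: "conn ?Y p q"
  have qp: "conn ?Y q p" using conn_sym[OF pq] .
  have all: "conn ?Y u w" if "conn OPT u w" for u w
    using that
  proof (induction rule: conn_induct)
    case refl then show ?case by simp
  next
    case (step y z)
    show ?case
    proof (cases "{y, z} = {p, q}")
      case False
      then have "conn ?Y y z" using step(2) by (intro conn_edge) auto
      then show ?thesis using conn_trans[OF step(3)] by simp
    next
      case True
      then have "(y = p \<and> z = q) \<or> (y = q \<and> z = p)" by (simp add: doubleton_eq_iff)
      then have "conn ?Y y z" using pq qp by auto
      then show ?thesis using conn_trans[OF step(3)] by simp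
    qed
  qed
  have "feasible V D ?Y"
    unfolding feasible_def
  proof
    fix d assume "d \<in> D"
    then obtain C where C: "C \<in> comps V OPT" "d \<subseteq> C" using mo by (auto simp: min_opt_def feasible_def)
    then obtain x where x: "x \<in> V" "C = {w\<in>V. conn OPT x w}" by (auto simp: comps_iff)
    have "d \<subseteq> {w\<in>V. conn ?Y x w}" using C x all by auto
    moreover have "{w\<in>V. conn ?Y x w} \<in> comps V ?Y" using comp_of_mem[OF x(1)] .
    ultimately show "\<exists>C\<in>comps V ?Y. d \<subseteq> C" by blast
  qed
  then show False using mo eo by (auto simp: min_opt_def)
qed

definition minimal_conn :: "'v set set \<Rightarrow> 'v set set \<Rightarrow> 'v set \<Rightarrow> bool" where
  "minimal_conn A X S \<longleftrightarrow> X \<subseteq> A \<and> connects X S \<and> (\<forall>X'. X' \<subset> X \<longrightarrow> \<not> connects X' S)"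

lemma connects_mono: "X \<subseteq> Y \<Longrightarrow> connects X S \<Longrightarrow> connects Y S"
  unfolding connects_def using conn_mono[of X Y] by blast

lemma tree_connects:
  assumes T: "T \<in> comps V OPT" and S: "S \<subseteq> T" and ev: "\<forall>e\<in>OPT. e \<subseteq> V"
  shows "connects {e\<in>OPT. e \<subseteq> T} S"
  unfolding connects_def
proof (intro ballI)
  let ?A = "{e\<in>OPT. e \<subseteq> T}"
  fix u w assume u: "u \<in> S" and w: "w \<in> S"
  have uT: "u \<in> T" using u S by blast
  have c: "conn OPT u w" using comp_conn[OF T uT] w S by blast
  have "conn ?A u w \<and> w \<in> T" using c
  proof (induction rule: conn_induct)
    case refl then show ?case using uT by simp
  next
    case (step y z)
    have zV: "z \<in> V" using ev step(2) by blast
    have "conn OPT y z" using conn_edge[OF step(2)] .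
    then have zT: "z \<in> T" using comp_closed[OF T _ zV] step(3) by blast
    have "{y, z} \<in> ?A" using step(2,3) zT by auto
    then have "conn ?A y z" by (rule conn_edge)
    then show ?case using conn_trans[of ?A u y z] step(3) zT by blast
  qed
  then show "conn ?A u w" by simp
qed

lemma minimal_exists:
  assumes "finite A" "connects A S"
  shows "\<exists>X. minimal_conn A X S"
proof -
  let ?P = "\<lambda>X. X \<subseteq> A \<and> connects X S"
  have "?P A" using assms by simp
  then obtain X where X: "?P X" "\<And>Y. ?P Y \<Longrightarrow> card X \<le> card Y"
    using ex_has_least_nat[of ?P A card] by blast
  have "\<not> connects X' S" if "X' \<subset> X" for X'
  proof
    assume "connects X' S"
    moreover have "X' \<subseteq> A" using that X(1) by blast
    ultimately have "card X \<le> card X'" using X(2) by blast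
    moreover have "card X' < card X" using psubset_card_mono[OF finite_subset[OF X(1)[THEN conjunct1] assms(1)] that] .
    ultimately show False by simp
  qed
  then show ?thesis using X(1) unfolding minimal_conn_def by blast
qed

lemma minimal_unique:
  assumes mo: "min_opt V E c D OPT" and inst: "sf_instance V E c D"
    and m: "minimal_conn {e\<in>OPT. e \<subseteq> T} X S"
  shows "X = {e\<in>OPT. e \<subseteq> T \<and> (\<exists>s\<in>S. \<exists>s'\<in>S. \<not> conn (OPT - {e}) s s')}"
proof
  have XA: "X \<subseteq> OPT" "\<forall>e\<in>X. e \<subseteq> T" and cX: "connects X S"
    and mX: "\<And>X'. X' \<subset> X \<Longrightarrow> \<not> connects X' S" using m unfolding minimal_conn_def by auto
  show "{e\<in>OPT. e \<subseteq> T \<and> (\<exists>s\<in>S. \<exists>s'\<in>S. \<not> conn (OPT - {e}) s s')} \<subseteq> X"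
  proof
    fix e assume "e \<in> {e\<in>OPT. e \<subseteq> T \<and> (\<exists>s\<in>S. \<exists>s'\<in>S. \<not> conn (OPT - {e}) s s')}"
    then obtain s s' where ss: "s \<in> S" "s' \<in> S" "\<not> conn (OPT - {e}) s s'" by blast
    show "e \<in> X"
    proof (rule ccontr)
      assume "e \<notin> X"
      then have "X \<subseteq> OPT - {e}" using XA by blast
      moreover have "conn X s s'" using cX ss unfolding connects_def by blast
      ultimately have "conn (OPT - {e}) s s'" by (rule conn_mono)
      then show False using ss(3) by simp
    qed
  qed
  show "X \<subseteq> {e\<in>OPT. e \<subseteq> T \<and> (\<exists>s\<in>S. \<exists>s'\<in>S. \<not> conn (OPT - {e}) s s')}"
  proof
    fix e assume eX: "e \<in> X"
    have eO: "e \<in> OPT" using eX XA by blast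
    have "e \<in> E" using eO mo by (auto simp: min_opt_def)
    then have "card e = 2" using inst by (simp add: sf_instance_def)
    then obtain p q where pq: "p \<noteq> q" "e = {p, q}" using card2_edge by blast
    show "e \<in> {e\<in>OPT. e \<subseteq> T \<and> (\<exists>s\<in>S. \<exists>s'\<in>S. \<not> conn (OPT - {e}) s s')}"
    proof (rule ccontr)
      assume "\<not> ?thesis"
      then have allc: "\<And>s s'. s \<in> S \<Longrightarrow> s' \<in> S \<Longrightarrow> conn (OPT - {e}) s s'" using eO eX XA by blast
      let ?W = "{x. conn (OPT - {e}) p x}"
      have nb: "\<not> conn (OPT - {e}) p q" using bridge[OF mo] eO pq by blast
      have pres: "y \<in> ?W" if "{x, y} \<in> OPT - {e}" "x \<in> ?W" for x y
        using that conn_trans[OF _ conn_edge[OF that(1)]] by blast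
      have cr: "y \<in> ?W" if "{x, y} \<in> X - {{p, q}}" "x \<in> ?W" for x y
        using pres[of x y] that XA pq by blast
      have "connects (X - {e}) S"
        unfolding connects_def
      proof (intro ballI)
        fix s s' assume s: "s \<in> S" and s': "s' \<in> S"
        have side: "s \<in> ?W \<longleftrightarrow> s' \<in> ?W" using conn_side[OF allc[OF s s'], of ?W] pres by blast
        have "conn X s s'" using cX s s' unfolding connects_def by blast
        from conn_remove_bridge[OF this, of p ?W q] show "conn (X - {e}) s s'"
          using cr side nb pq by auto
      qed
      moreover have "X - {e} \<subset> X" using eX by blast
      ultimately show False using mX by blast
    qed
  qed
qed

lemma min_subtree_props:
  assumes mo: "min_opt V E c D OPT" and inst: "sf_instance V E c D"
    and T: "T \<in> comps V OPT" and S: "S \<subseteq> T"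
  shows "minimal_conn {e\<in>OPT. e \<subseteq> T} (min_subtree OPT T S) S"
proof -
  have ev: "\<forall>e\<in>OPT. e \<subseteq> V" using mo inst by (auto simp: min_opt_def sf_instance_def)
  have fV: "finite V" using inst by (simp add: sf_instance_def)
  have "OPT \<subseteq> Pow V" using ev by blast
  then have "finite OPT" using fV finite_subset by blast
  then have fA: "finite {e\<in>OPT. e \<subseteq> T}" by simp
  obtain X where X: "minimal_conn {e\<in>OPT. e \<subseteq> T} X S"
    using minimal_exists[OF fA tree_connects[OF T S ev]] by blast
  have "min_subtree OPT T S = X"
    unfolding min_subtree_def
  proof (rule the_equality)
    show "X \<subseteq> {e \<in> OPT. e \<subseteq> T} \<and> connects X S \<and> (\<forall>X'. X' \<subset> X \<longrightarrow> \<not> connects X' S)"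
      using X unfolding minimal_conn_def by blast
  next
    fix Y assume "Y \<subseteq> {e \<in> OPT. e \<subseteq> T} \<and> connects Y S \<and> (\<forall>X'. X' \<subset> Y \<longrightarrow> \<not> connects X' S)"
    then have "minimal_conn {e\<in>OPT. e \<subseteq> T} Y S" unfolding minimal_conn_def by blast
    show "Y = X" using minimal_unique[OF mo inst \<open>minimal_conn _ Y S\<close>] minimal_unique[OF mo inst X] by simp
  qed
  then show ?thesis using X by simp
qed

lemma grow_unfold:
  assumes "grow_step V E c D \<epsilon> s s'"
  shows "sF s' = sF s \<and> (\<exists>\<Delta>>0. st s' = st s + \<Delta>
     \<and> sy s' = (\<lambda>S. if S \<in> active V D (sF s) (sb s) then sy s S + \<Delta> else sy s S)
     \<and> (\<forall>e\<in>E. load V (sy s') e \<le> c e))"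
  using assms unfolding grow_step_def Let_def by blast

lemma merge_unfold:
  assumes "merge_step V E c s s'"
  shows "st s' = st s \<and> sy s' = sy s \<and> sF s \<subseteq> sF s'"
  using assms unfolding merge_step_def by auto

locale runctx =
  fixes V :: "'v set" and E :: "'v set set" and c :: "'v set \<Rightarrow> real" and D :: "'v set set"
    and \<epsilon> :: real and R :: "'v state list"
  assumes inst: "sf_instance V E c D" and run: "moat_run V E c D \<epsilon> R"
begin

abbreviation "L \<equiv> length R"

lemma R_ne: "R \<noteq> []" using run by (simp add: moat_run_def)

lemma L_pos: "0 < L" using R_ne by simp

lemma R0: "R ! 0 = ({}, (\<lambda>_. 0), (\<lambda>_. 0), 0)" using run by (simp add: moat_run_def)

lemma stepR: "Suc i < L \<Longrightarrow> merge_step V E c (R ! i) (R ! Suc i) \<or> grow_step V E c D \<epsilon> (R ! i) (R ! Suc i)"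
  using run by (simp add: moat_run_def)

lemma st_step: assumes "Suc i < L" shows "st (R ! i) \<le> st (R ! Suc i)"
  using stepR[OF assms]
proof
  assume m: "merge_step V E c (R ! i) (R ! Suc i)"
  show ?thesis using merge_unfold[OF m] by simp
next
  assume g: "grow_step V E c D \<epsilon> (R ! i) (R ! Suc i)"
  obtain \<Delta> where "\<Delta> > 0" "st (R ! Suc i) = st (R ! i) + \<Delta>" using grow_unfold[OF g] by blast
  then show ?thesis by simp
qed

lemma sF_step: assumes "Suc i < L" shows "sF (R ! i) \<subseteq> sF (R ! Suc i)"
  using stepR[OF assms]
proof
  assume m: "merge_step V E c (R ! i) (R ! Suc i)"
  show ?thesis using merge_unfold[OF m] by simp
next
  assume g: "grow_step V E c D \<epsilon> (R ! i) (R ! Suc i)"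
  show ?thesis using grow_unfold[OF g] by simp
qed

lemma st_mono: "i \<le> j \<Longrightarrow> j < L \<Longrightarrow> st (R ! i) \<le> st (R ! j)"
proof (induction j rule: dec_induct)
  case base then show ?case by simp
next
  case (step n) then show ?case using st_step[of n] by simp
qed

lemma sF_mono: "i \<le> j \<Longrightarrow> j < L \<Longrightarrow> sF (R ! i) \<subseteq> sF (R ! j)"
proof (induction j rule: dec_induct)
  case base then show ?case by simp
next
  case (step n) then show ?case using sF_step[of n] by simp
qed

lemma st0: "st (R ! 0) = 0" using R0 by (simp add: st_def)

lemma st_nonneg: "j < L \<Longrightarrow> 0 \<le> st (R ! j)"
  using st_mono[of 0 j] st0 by simp

definition "Tl = st (R ! (L - 1))"

lemma st_le_Tl: "j < L \<Longrightarrow> st (R ! j) \<le> Tl"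
  unfolding Tl_def using st_mono[of j "L - 1"] by simp

lemma Tl_nonneg: "0 \<le> Tl" using st_le_Tl[of 0] st0 L_pos by simp

lemma idx_props:
  assumes "0 \<le> s"
  shows "idx R s < L" "st (R ! idx R s) \<le> s" "\<And>j. j < L \<Longrightarrow> st (R ! j) \<le> s \<Longrightarrow> j \<le> idx R s"
proof -
  let ?P = "\<lambda>i. i < L \<and> st (R ! i) \<le> s"
  have P0: "?P 0" using L_pos st0 assms by simp
  have b: "\<And>y. ?P y \<Longrightarrow> y \<le> L" by simp
  have "?P (Greatest ?P)" using GreatestI_nat[of ?P 0 L, OF P0 b] .
  then show "idx R s < L" "st (R ! idx R s) \<le> s" unfolding idx_def by auto
  fix j assume "j < L" "st (R ! j) \<le> s"
  then show "j \<le> idx R s" unfolding idx_def using Greatest_le_nat[of ?P j L] b by blast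
qed

lemma idx_mono: "0 \<le> s \<Longrightarrow> s \<le> s' \<Longrightarrow> idx R s \<le> idx R s'"
  using idx_props[of s] idx_props[of s'] by force

definition "Fat s = sF (R ! idx R s)"

lemma Fat_mono: "0 \<le> s \<Longrightarrow> s \<le> s' \<Longrightarrow> Fat s \<subseteq> Fat s'"
  unfolding Fat_def using sF_mono idx_mono idx_props(1)[of s'] by simp

lemma CN_mono: "0 \<le> s \<Longrightarrow> s \<le> s' \<Longrightarrow> conn (Fat s) u v \<Longrightarrow> conn (Fat s') u v"
  using conn_mono[OF Fat_mono] by blast

lemma idx_Tl: "idx R Tl = L - 1"
proof -
  have "idx R Tl < L" using idx_props(1)[OF Tl_nonneg] .
  moreover have "L - 1 \<le> idx R Tl" using idx_props(3)[OF Tl_nonneg, of "L - 1"] L_pos Tl_def by simp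
  ultimately show ?thesis by simp
qed

lemma last_R: "last R = R ! (L - 1)" using last_conv_nth[OF R_ne] .

lemma act_at_Tl: "act_at V D R Tl = {}"
  using run idx_Tl last_R unfolding act_at_def moat_run_def by simp

definition good :: "'v \<Rightarrow> real \<Rightarrow> bool" where
  "good v t \<longleftrightarrow> (\<forall>s. 0 \<le> s \<and> s < t \<longrightarrow> (\<exists>C\<in>act_at V D R s. v \<in> C))"

lemma good_bound: "good v t \<Longrightarrow> t \<le> Tl"
proof (rule ccontr)
  assume "good v t" "\<not> t \<le> Tl"
  then have "\<exists>C\<in>act_at V D R Tl. v \<in> C" using Tl_nonneg unfolding good_def by simp
  then show False using act_at_Tl by simp
qed

lemma tau_ge: assumes "0 \<le> t" shows "t \<le> tau V D R v \<longleftrightarrow> good v t"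
proof -
  let ?G = "{t. 0 \<le> t \<and> (\<forall>s. 0 \<le> s \<and> s < t \<longrightarrow> (\<exists>C\<in>act_at V D R s. v \<in> C))}"
  have G: "?G = {t. 0 \<le> t \<and> good v t}" unfolding good_def by simp
  have ne: "?G \<noteq> {}" using G by (auto simp: good_def intro!: exI[of _ 0])
  have bdd: "bdd_above ?G" using G good_bound by (auto intro!: bdd_aboveI[of _ Tl])
  have tau: "tau V D R v = Sup ?G" unfolding tau_def by simp
  show ?thesis
  proof
    assume "t \<le> tau V D R v"
    show "good v t" unfolding good_def
    proof (intro allI impI)
      fix s assume s: "0 \<le> s \<and> s < t"
      then have "s < Sup ?G" using \<open>t \<le> tau V D R v\<close> tau by simp
      then obtain x where "x \<in> ?G" "s < x" using less_cSup_iff[OF ne bdd] by blast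
      then show "\<exists>C\<in>act_at V D R s. v \<in> C" using s by blast
    qed
  next
    assume "good v t"
    then have "t \<in> ?G" using assms G by simp
    then show "t \<le> tau V D R v" using cSup_upper[OF _ bdd] tau by simp
  qed
qed

lemma comps_at_eq: "comps_at V R t = comps V (Fat t)"
  unfolding comps_at_def Fat_def by simp

lemma comps_at_iff: "(\<exists>C\<in>comps_at V R t. u \<in> C \<and> v \<in> C) \<longleftrightarrow> u \<in> V \<and> v \<in> V \<and> conn (Fat t) u v"
proof
  assume "\<exists>C\<in>comps_at V R t. u \<in> C \<and> v \<in> C"
  then have "\<exists>C\<in>comps V (Fat t). u \<in> C \<and> v \<in> C" by (simp only: comps_at_eq)
  then obtain C where C: "C \<in> comps V (Fat t)" "u \<in> C" "v \<in> C" by blast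
  have "C \<subseteq> V" by (rule comps_sub[OF C(1)])
  moreover have "conn (Fat t) u v" by (rule comp_conn[OF C])
  ultimately show "u \<in> V \<and> v \<in> V \<and> conn (Fat t) u v" using C(2,3) by blast
next
  assume a: "u \<in> V \<and> v \<in> V \<and> conn (Fat t) u v"
  define C where "C = {w\<in>V. conn (Fat t) u w}"
  have C1: "C \<in> comps V (Fat t)" unfolding C_def using a by (intro comp_of_mem) simp
  have C2: "u \<in> C \<and> v \<in> C" unfolding C_def using a by simp
  have "\<exists>C\<in>comps V (Fat t). u \<in> C \<and> v \<in> C" using C1 C2 by (rule bexI[rotated])
  then show "\<exists>C\<in>comps_at V R t. u \<in> C \<and> v \<in> C" by (simp only: comps_at_eq)
qed

lemma act_conn_iff: "act_conn V D R u v \<longleftrightarrow> (\<exists>t\<ge>0. u \<in> V \<and> v \<in> V \<and> conn (Fat t) u v \<and> good u t \<and> good v t)"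
proof
  assume a: "act_conn V D R u v"
  have "\<exists>t\<ge>0. (\<exists>C\<in>comps_at V R t. u \<in> C \<and> v \<in> C) \<and> tau V D R u \<ge> t \<and> tau V D R v \<ge> t"
    using a by (simp only: act_conn_def)
  then obtain t where t: "t \<ge> 0" "\<exists>C\<in>comps_at V R t. u \<in> C \<and> v \<in> C" "tau V D R u \<ge> t" "tau V D R v \<ge> t"
    by blast
  have "u \<in> V \<and> v \<in> V \<and> conn (Fat t) u v" using t(2) by (simp only: comps_at_iff)
  moreover have "good u t" "good v t" using t(3,4) tau_ge[OF t(1)] by simp_all
  ultimately show "\<exists>t\<ge>0. u \<in> V \<and> v \<in> V \<and> conn (Fat t) u v \<and> good u t \<and> good v t" using t(1) by blast
next
  assume "\<exists>t\<ge>0. u \<in> V \<and> v \<in> V \<and> conn (Fat t) u v \<and> good u t \<and> good v t"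
  then obtain t where t: "t \<ge> 0" "u \<in> V \<and> v \<in> V \<and> conn (Fat t) u v" "good u t" "good v t" by blast
  have "\<exists>C\<in>comps_at V R t. u \<in> C \<and> v \<in> C" using t(2) by (simp only: comps_at_iff)
  moreover have "tau V D R u \<ge> t" "tau V D R v \<ge> t" using t(3,4) tau_ge[OF t(1)] by simp_all
  ultimately have "\<exists>t\<ge>0. (\<exists>C\<in>comps_at V R t. u \<in> C \<and> v \<in> C) \<and> tau V D R u \<ge> t \<and> tau V D R v \<ge> t"
    using t(1) by blast
  then show "act_conn V D R u v" by (simp only: act_conn_def)
qed

lemma act_at_comps: "C \<in> act_at V D R s \<Longrightarrow> C \<in> comps V (Fat s)"
  unfolding act_at_def active_def Fat_def by simp

lemma keyK:
  assumes u: "u \<in> V" and cn: "conn (Fat t1) u v" and t: "0 \<le> t1" "t1 \<le> t2"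
    and gu: "good u t1" and gv: "good v t2"
  shows "good u t2"
  unfolding good_def
proof (intro allI impI)
  fix s assume s: "0 \<le> s \<and> s < t2"
  show "\<exists>C\<in>act_at V D R s. u \<in> C"
  proof (cases "s < t1")
    case True then show ?thesis using gu s unfolding good_def by blast
  next
    case False
    obtain C where C: "C \<in> act_at V D R s" "v \<in> C" using gv s unfolding good_def by blast
    have "conn (Fat s) u v" using CN_mono[OF t(1) _ cn] False by simp
    then have "conn (Fat s) v u" by (rule conn_sym)
    then have "u \<in> C" using comp_closed[OF act_at_comps[OF C(1)] C(2) u] by simp
    then show ?thesis using C(1) by blast
  qed
qed

lemma good_mono: "good v t \<Longrightarrow> t' \<le> t \<Longrightarrow> good v t'"
  unfolding good_def by auto

lemma act_conn_intro: "t \<ge> 0 \<Longrightarrow> u \<in> V \<Longrightarrow> v \<in> V \<Longrightarrow> conn (Fat t) u v \<Longrightarrow> good u t \<Longrightarrow> good v t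
  \<Longrightarrow> act_conn V D R u v"
  unfolding act_conn_iff by blast

lemma act_conn_elim:
  assumes "act_conn V D R u v"
  obtains t where "t \<ge> 0" "u \<in> V" "v \<in> V" "conn (Fat t) u v" "good u t" "good v t"
  using assms unfolding act_conn_iff by blast

lemma act_conn_sym: assumes "act_conn V D R u v" shows "act_conn V D R v u"
proof -
  obtain t where "t \<ge> 0" "u \<in> V" "v \<in> V" "conn (Fat t) u v" "good u t" "good v t"
    using act_conn_elim[OF assms] .
  then show ?thesis using act_conn_intro[of t v u] conn_sym[of "Fat t" u v] by simp
qed

lemma act_conn_trans:
  assumes "act_conn V D R u v" "act_conn V D R v w"
  shows "act_conn V D R u w"
proof -
  obtain t1 where 1: "t1 \<ge> 0" "u \<in> V" "v \<in> V" "conn (Fat t1) u v" "good u t1" "good v t1"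
    using act_conn_elim[OF assms(1)] .
  obtain t2 where 2: "t2 \<ge> 0" "v \<in> V" "w \<in> V" "conn (Fat t2) v w" "good v t2" "good w t2"
    using act_conn_elim[OF assms(2)] .
  show ?thesis
  proof (cases "t1 \<le> t2")
    case True
    have gu: "good u t2" using keyK[OF 1(2) 1(4) 1(1) True 1(5) 2(5)] .
    have "conn (Fat t2) u v" using CN_mono[OF 1(1) True 1(4)] .
    then have "conn (Fat t2) u w" using conn_trans[OF _ 2(4)] by simp
    then show ?thesis using act_conn_intro[OF 2(1) 1(2) 2(3) _ gu 2(6)] by simp
  next
    case False
    then have le: "t2 \<le> t1" by simp
    have cwv: "conn (Fat t2) w v" using conn_sym[OF 2(4)] .
    have gw: "good w t1" using keyK[OF 2(3) cwv 2(1) le 2(6) 1(6)] .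
    have "conn (Fat t1) v w" using CN_mono[OF 2(1) le 2(4)] .
    then have "conn (Fat t1) u w" using conn_trans[OF 1(4)] by simp
    then show ?thesis using act_conn_intro[OF 1(1) 1(2) 2(3) _ 1(5) gw] by simp
  qed
qed

lemma dact_comp:
  assumes a: "a \<in> V" and d: "{a, b} \<in> D" and nc: "\<not> conn F a b"
  shows "{w\<in>V. conn F a w} \<in> active V D F bb"
proof -
  define C where "C = {w\<in>V. conn F a w}"
  have C: "C \<in> comps V F" unfolding C_def using comp_of_mem[OF a] .
  have aC: "a \<in> C" unfolding C_def using a by simp
  have bC: "b \<notin> C" unfolding C_def using nc by simp
  have "\<not> {a, b} \<subseteq> C" using bC by simp
  then have "dact D C" unfolding dact_def using aC d by blast
  then show ?thesis using C unfolding active_def C_def by simp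
qed

lemma dact_good:
  assumes a: "a \<in> V" and d: "{a, b} \<in> D" and s: "0 \<le> s" and nc: "\<not> conn (Fat s) a b"
  shows "\<exists>C\<in>act_at V D R s. a \<in> C"
proof -
  have "{w\<in>V. conn (Fat s) a w} \<in> act_at V D R s"
    using dact_comp[OF a d nc] unfolding act_at_def Fat_def by simp
  moreover have "a \<in> {w\<in>V. conn (Fat s) a w}" using a by simp
  ultimately show ?thesis by (rule bexI[rotated])
qed

lemma D_sub: "d \<in> D \<Longrightarrow> d \<subseteq> V" using inst by (simp add: sf_instance_def)

lemma final_conn:
  assumes d: "{a, b} \<in> D"
  shows "conn (sF (R ! (L - 1))) a b"
proof (rule ccontr)
  assume nc: "\<not> ?thesis"
  have a: "a \<in> V" using D_sub[OF d] by simp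
  have "{w\<in>V. conn (sF (R ! (L - 1))) a w} \<in> active V D (sF (R ! (L - 1))) (sb (R ! (L - 1)))"
    by (rule dact_comp[OF a d nc])
  moreover have "active V D (sF (R ! (L - 1))) (sb (R ! (L - 1))) = {}"
    using run last_R unfolding moat_run_def by simp
  ultimately show False by simp
qed

lemma demand_act_conn:
  assumes d: "{a, b} \<in> D"
  shows "act_conn V D R a b"
proof -
  have a: "a \<in> V" and b: "b \<in> V" using D_sub[OF d] by auto
  have d': "{b, a} \<in> D" using d by (simp add: insert_commute)
  let ?P = "\<lambda>j. j < L \<and> conn (sF (R ! j)) a b"
  have P: "?P (L - 1)" using final_conn[OF d] L_pos by simp
  define j where "j = (LEAST j. ?P j)"
  have Pj: "?P j" using LeastI[of ?P, OF P] j_def by simp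
  have jmin: "j \<le> k" if "?P k" for k using Least_le[of ?P k, OF that] j_def by simp
  define t where "t = st (R ! j)"
  have t0: "0 \<le> t" using st_nonneg Pj t_def by simp
  have nc: "\<not> conn (Fat s) a b" if s: "0 \<le> s" "s < t" for s
  proof
    assume "conn (Fat s) a b"
    then have "?P (idx R s)" using idx_props(1)[OF s(1)] unfolding Fat_def by simp
    then have "j \<le> idx R s" by (rule jmin)
    then have "st (R ! j) \<le> st (R ! idx R s)" using st_mono idx_props(1)[OF s(1)] by simp
    then show False using idx_props(2)[OF s(1)] s t_def by simp
  qed
  have ga: "good a t" unfolding good_def
  proof (intro allI impI)
    fix s assume s: "0 \<le> s \<and> s < t"
    show "\<exists>C\<in>act_at V D R s. a \<in> C" using dact_good[OF a d _ nc] s by simp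
  qed
  have gb: "good b t" unfolding good_def
  proof (intro allI impI)
    fix s assume s: "0 \<le> s \<and> s < t"
    have "\<not> conn (Fat s) b a" using nc[of s] s conn_sym[of "Fat s" b a] by auto
    then show "\<exists>C\<in>act_at V D R s. b \<in> C" using dact_good[OF b d'] s by simp
  qed
  have "j \<le> idx R t" using idx_props(3)[OF t0, of j] Pj t_def by simp
  then have "sF (R ! j) \<subseteq> Fat t" unfolding Fat_def using sF_mono idx_props(1)[OF t0] by simp
  then have "conn (Fat t) a b" using conn_mono[of "sF (R ! j)" "Fat t" a b] Pj by simp
  then show ?thesis using act_conn_intro[OF t0 a b _ ga gb] by simp
qed

end

context runctx
begin

lemma sy0: "sy (R ! 0) = (\<lambda>_. 0)" using R0 by (simp add: sy_def)

lemma y_support: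
  assumes "j < L" "sy (R ! j) U \<noteq> 0"
  shows "\<exists>i. Suc i \<le> j \<and> grow_step V E c D \<epsilon> (R ! i) (R ! Suc i) \<and> U \<in> active V D (sF (R ! i)) (sb (R ! i))"
  using assms
proof (induction j)
  case 0 then show ?case using sy0 by simp
next
  case (Suc j)
  have jL: "Suc j < L" using Suc.prems(1) .
  show ?case using stepR[OF jL]
  proof
    assume m: "merge_step V E c (R ! j) (R ! Suc j)"
    have "sy (R ! j) U \<noteq> 0" using merge_unfold[OF m] Suc.prems(2) by simp
    then obtain i where "Suc i \<le> j \<and> grow_step V E c D \<epsilon> (R ! i) (R ! Suc i) \<and> U \<in> active V D (sF (R ! i)) (sb (R ! i))"
      using Suc.IH jL by fastforce
    then show ?thesis by (intro exI[of _ i]) simp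
  next
    assume g: "grow_step V E c D \<epsilon> (R ! j) (R ! Suc j)"
    obtain \<Delta> where \<Delta>: "sy (R ! Suc j) = (\<lambda>S. if S \<in> active V D (sF (R ! j)) (sb (R ! j)) then sy (R ! j) S + \<Delta> else sy (R ! j) S)"
      using grow_unfold[OF g] by blast
    show ?thesis
    proof (cases "U \<in> active V D (sF (R ! j)) (sb (R ! j))")
      case True then show ?thesis using g by (intro exI[of _ j]) simp
    next
      case False
      then have "sy (R ! j) U \<noteq> 0" using \<Delta> Suc.prems(2) by simp
      then obtain i where "Suc i \<le> j \<and> grow_step V E c D \<epsilon> (R ! i) (R ! Suc i) \<and> U \<in> active V D (sF (R ! i)) (sb (R ! i))"
        using Suc.IH jL by fastforce
      then show ?thesis by (intro exI[of _ i]) simp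
    qed
  qed
qed

lemma y_nonneg: "j < L \<Longrightarrow> 0 \<le> sy (R ! j) U"
proof (induction j)
  case 0 then show ?case using sy0 by simp
next
  case (Suc j)
  have jL: "Suc j < L" using Suc.prems(1) .
  show ?case using stepR[OF jL]
  proof
    assume m: "merge_step V E c (R ! j) (R ! Suc j)"
    then show ?thesis using merge_unfold[OF m] Suc.IH jL by simp
  next
    assume g: "grow_step V E c D \<epsilon> (R ! j) (R ! Suc j)"
    obtain \<Delta> where \<Delta>: "\<Delta> > 0" "sy (R ! Suc j) = (\<lambda>S. if S \<in> active V D (sF (R ! j)) (sb (R ! j)) then sy (R ! j) S + \<Delta> else sy (R ! j) S)"
      using grow_unfold[OF g] by blast
    have "0 \<le> sy (R ! j) U" using Suc.IH jL by simp
    then show ?thesis using \<Delta> by simp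
  qed
qed

lemma c_nonneg: "e \<in> E \<Longrightarrow> 0 \<le> c e" using inst by (simp add: sf_instance_def)

lemma load_le: "j < L \<Longrightarrow> e \<in> E \<Longrightarrow> load V (sy (R ! j)) e \<le> c e"
proof (induction j)
  case 0 then show ?case using sy0 c_nonneg by (simp add: load_def)
next
  case (Suc j)
  have jL: "Suc j < L" using Suc.prems(1) .
  show ?case using stepR[OF jL]
  proof
    assume m: "merge_step V E c (R ! j) (R ! Suc j)"
    then show ?thesis using merge_unfold[OF m] Suc.IH Suc.prems jL by simp
  next
    assume g: "grow_step V E c D \<epsilon> (R ! j) (R ! Suc j)"
    then show ?thesis using grow_unfold[OF g] Suc.prems by blast
  qed
qed

lemma yfin_eq: "yfin R = sy (R ! (L - 1))" using last_R by (simp add: yfin_def)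

lemma yfin_nonneg: "0 \<le> yfin R U" using yfin_eq y_nonneg[of "L - 1"] L_pos by simp

lemma yfin_load: "e \<in> E \<Longrightarrow> load V (yfin R) e \<le> c e" using yfin_eq load_le[of "L - 1"] L_pos by simp

lemma yfin_support:
  assumes "yfin R U \<noteq> 0"
  shows "\<exists>i. Suc i < L \<and> grow_step V E c D \<epsilon> (R ! i) (R ! Suc i) \<and> U \<in> comps V (sF (R ! i))"
proof -
  obtain i where i: "Suc i \<le> L - 1" "grow_step V E c D \<epsilon> (R ! i) (R ! Suc i)" "U \<in> active V D (sF (R ! i)) (sb (R ! i))"
    using y_support[of "L - 1" U] assms yfin_eq L_pos by auto
  have "U \<in> comps V (sF (R ! i))" using i(3) unfolding active_def by simp
  moreover have "Suc i < L" using i(1) L_pos by simp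
  ultimately show ?thesis using i(2) by blast
qed

lemma grow_idx:
  assumes i: "Suc i < L" and g: "grow_step V E c D \<epsilon> (R ! i) (R ! Suc i)"
  shows "idx R (st (R ! i)) = i"
proof -
  have t0: "0 \<le> st (R ! i)" using st_nonneg i by simp
  have ge: "i \<le> idx R (st (R ! i))" using idx_props(3)[OF t0, of i] i by simp
  obtain \<Delta> where \<Delta>: "\<Delta> > 0" "st (R ! Suc i) = st (R ! i) + \<Delta>" using grow_unfold[OF g] by blast
  have "\<not> Suc i \<le> idx R (st (R ! i))"
  proof
    assume "Suc i \<le> idx R (st (R ! i))"
    then have "st (R ! Suc i) \<le> st (R ! idx R (st (R ! i)))" using st_mono idx_props(1)[OF t0] by simp
    then show False using idx_props(2)[OF t0] \<Delta> by simp
  qed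
  then show ?thesis using ge by simp
qed

lemma crux:
  assumes i: "Suc i < L" and g: "grow_step V E c D \<epsilon> (R ! i) (R ! Suc i)"
    and U: "U \<in> comps V (sF (R ! i))" and a: "a \<in> U" and b: "b \<notin> U" and d: "{a, b} \<in> D"
    and s1: "s1 \<in> U" and s2: "s2 \<in> V" "s2 \<notin> U"
    and c1: "act_conn V D R s1 rr" and c2: "act_conn V D R s2 rr"
  shows "act_conn V D R a rr \<and> act_conn V D R b rr"
proof -
  define t0 where "t0 = st (R ! i)"
  have t0: "0 \<le> t0" using st_nonneg i t0_def by simp
  have Ft0: "Fat t0 = sF (R ! i)" unfolding Fat_def t0_def using grow_idx[OF i g] by simp
  have UV: "U \<subseteq> V" using comps_sub[OF U] .
  have aV: "a \<in> V" using a UV by blast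
  have bV: "b \<in> V" using D_sub[OF d] by simp
  have s12: "act_conn V D R s1 s2" using act_conn_trans[OF c1 act_conn_sym[OF c2]] .
  obtain t2 where t2: "t2 \<ge> 0" "s1 \<in> V" "conn (Fat t2) s1 s2" "good s1 t2" "good s2 t2"
    using act_conn_elim[OF s12] by metis
  have le: "t0 \<le> t2"
  proof (rule ccontr)
    assume "\<not> t0 \<le> t2"
    then have "conn (Fat t0) s1 s2" using CN_mono[OF t2(1) _ t2(3)] by simp
    then have "s2 \<in> U" using comp_closed[OF U s1 s2(1)] Ft0 by simp
    then show False using s2(2) by simp
  qed
  have as1: "conn (Fat t0) a s1" using comp_conn[OF U a s1] Ft0 by simp
  have ga: "good a t2" unfolding good_def
  proof (intro allI impI)
    fix s assume s: "0 \<le> s \<and> s < t2"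
    show "\<exists>C\<in>act_at V D R s. a \<in> C"
    proof (cases "s < t0")
      case True
      have "\<not> conn (Fat s) a b"
      proof
        assume "conn (Fat s) a b"
        then have "conn (Fat t0) a b" using CN_mono[of s t0] s True by simp
        then have "b \<in> U" using comp_closed[OF U a bV] Ft0 by simp
        then show False using b by simp
      qed
      then show ?thesis using dact_good[OF aV d] s by simp
    next
      case False
      obtain C where C: "C \<in> act_at V D R s" "s1 \<in> C" using t2(4) s unfolding good_def by blast
      have "conn (Fat s) a s1" using CN_mono[OF t0 _ as1] False by simp
      then have "conn (Fat s) s1 a" by (rule conn_sym)
      then have "a \<in> C" using comp_closed[OF act_at_comps[OF C(1)] C(2) aV] by simp
      then show ?thesis using C(1) by blast
    qed
  qed
  have "conn (Fat t2) a s1" using CN_mono[OF t0 le as1] .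
  then have "act_conn V D R a s1" using act_conn_intro[OF t2(1) aV t2(2) _ ga t2(4)] by simp
  then have ar: "act_conn V D R a rr" using act_conn_trans c1 by blast
  have "act_conn V D R b a" using act_conn_sym[OF demand_act_conn[OF d]] .
  then have "act_conn V D R b rr" using act_conn_trans ar by blast
  then show ?thesis using ar by simp
qed

end

definition Ncr :: "'v set set \<Rightarrow> 'v set \<Rightarrow> nat" where
  "Ncr X U = card {e\<in>X. in_delta U e}"

lemma load_swap:
  assumes fV: "finite V" and fX: "finite X"
  shows "(\<Sum>e\<in>X. load V y e) = (\<Sum>U\<in>Pow V. y U * real (Ncr X U))"
proof -
  have fP: "finite (Pow V)" using fV by simp
  have "load V y e = (\<Sum>U\<in>Pow V. if in_delta U e then y U else 0)" for e
  proof -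
    have "{S. S \<subseteq> V \<and> in_delta S e} = {U\<in>Pow V. in_delta U e}" by auto
    then show ?thesis unfolding load_def using sum.inter_filter[OF fP, of y "\<lambda>U. in_delta U e"] by simp
  qed
  then have "(\<Sum>e\<in>X. load V y e) = (\<Sum>e\<in>X. \<Sum>U\<in>Pow V. if in_delta U e then y U else 0)" by simp
  also have "\<dots> = (\<Sum>U\<in>Pow V. \<Sum>e\<in>X. if in_delta U e then y U else 0)" by (rule sum.swap)
  also have "\<dots> = (\<Sum>U\<in>Pow V. y U * real (Ncr X U))"
  proof (rule sum.cong[OF refl])
    fix U
    have "(\<Sum>e\<in>X. if in_delta U e then y U else 0) = (\<Sum>e\<in>{e\<in>X. in_delta U e}. y U)"
      using sum.inter_filter[OF fX, of "\<lambda>_. y U" "in_delta U"] by simp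
    also have "\<dots> = y U * real (Ncr X U)" unfolding Ncr_def by simp
    finally show "(\<Sum>e\<in>X. if in_delta U e then y U else 0) = y U * real (Ncr X U)" .
  qed
  finally show ?thesis .
qed

lemma perU:
  fixes yU :: real and nx no :: nat
  assumes y: "0 \<le> yU" and le: "nx \<le> no"
    and us: "us \<Longrightarrow> 1 \<le> no"
    and cr: "us \<Longrightarrow> no = 1 \<Longrightarrow> 1 \<le> nx \<Longrightarrow> sat"
  shows "yU * real nx \<le> (if us \<and> sat then yU else 0) + 2 * (yU * real no) - 2 * (if us then yU else 0)"
proof (cases us)
  case False
  have "yU * real nx \<le> yU * real no" using le y by (simp add: mult_left_mono)
  also have "\<dots> \<le> 2 * (yU * real no)" using y by simp
  finally show ?thesis using False by simp
next
  case True
  have n1: "1 \<le> no" using us True by simp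
  show ?thesis
  proof (cases "no = 1")
    case False
    then have "2 \<le> no" using n1 by simp
    then have "real nx \<le> 2 * real no - 2" using le by simp
    then have "yU * real nx \<le> yU * (2 * real no - 2)" using y by (simp add: mult_left_mono)
    then show ?thesis using True y by (simp add: algebra_simps)
  next
    case no1: True
    show ?thesis
    proof (cases "nx = 0")
      case True then show ?thesis using no1 y by simp
    next
      case False
      then have "nx = 1" using le no1 by simp
      moreover have sat using cr \<open>us\<close> no1 \<open>nx = 1\<close> by simp
      ultimately show ?thesis using no1 \<open>us\<close> by simp
    qed
  qed
qed

lemma algebra_main:
  fixes y :: "'v set \<Rightarrow> real"
  assumes fV: "finite V" and XO: "Xs \<subseteq> OPT" and fO: "finite OPT"
    and ld: "\<And>e. e \<in> OPT \<Longrightarrow> load V y e \<le> c e"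
    and yn: "\<And>U. 0 \<le> y U"
    and fD: "finite Dsat"
    and lb: "\<And>U. U \<in> Usep V D y \<Longrightarrow> 1 \<le> Ncr OPT U"
    and cr: "\<And>U. U \<in> Usep V D y \<Longrightarrow> Ncr OPT U = 1 \<Longrightarrow> 1 \<le> Ncr Xs U \<Longrightarrow> \<phi> U \<in> Dsat"
  shows "cost c Xs \<le> (\<Sum>d\<in>Dsat. val V D y \<phi> d) + 2 * excess V D c y OPT"
proof -
  let ?P = "Pow V"
  have fP: "finite ?P" using fV by simp
  have fX: "finite Xs" using XO fO by (rule finite_subset)
  have US: "Usep V D y \<subseteq> ?P" unfolding Usep_def by auto
  define sl where "sl e = c e - load V y e" for e
  have sl0: "\<And>e. e \<in> OPT \<Longrightarrow> 0 \<le> sl e" using ld unfolding sl_def by simp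
  have cX: "cost c Xs = (\<Sum>U\<in>?P. y U * real (Ncr Xs U)) + (\<Sum>e\<in>Xs. sl e)"
    unfolding cost_def sl_def using load_swap[OF fV fX, of y] by (simp add: sum_subtractf)
  have cO: "cost c OPT = (\<Sum>U\<in>?P. y U * real (Ncr OPT U)) + (\<Sum>e\<in>OPT. sl e)"
    unfolding cost_def sl_def using load_swap[OF fV fO, of y] by (simp add: sum_subtractf)
  have slXO: "(\<Sum>e\<in>Xs. sl e) \<le> (\<Sum>e\<in>OPT. sl e)"
    using sum_mono2[OF fO XO] sl0 by blast
  have slO: "0 \<le> (\<Sum>e\<in>OPT. sl e)" using sum_nonneg sl0 by blast
  have Usum: "(\<Sum>U\<in>Usep V D y. y U) = (\<Sum>U\<in>?P. if U \<in> Usep V D y then y U else 0)"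
  proof -
    have e: "Usep V D y = {U\<in>?P. U \<in> Usep V D y}" using US by blast
    have "sum y (Usep V D y) = sum y {U\<in>?P. U \<in> Usep V D y}" by (subst e) (rule refl)
    also have "\<dots> = (\<Sum>U\<in>?P. if U \<in> Usep V D y then y U else 0)" by (rule sum.inter_filter[OF fP])
    finally show ?thesis .
  qed
  have Vsum: "(\<Sum>d\<in>Dsat. val V D y \<phi> d) = (\<Sum>U\<in>?P. if U \<in> Usep V D y \<and> \<phi> U \<in> Dsat then y U else 0)"
  proof -
    let ?S = "{U\<in>Usep V D y. \<phi> U \<in> Dsat}"
    have "?S \<subseteq> ?P" using US by auto
    then have fS: "finite ?S" using fP by (rule finite_subset)
    have "(\<Sum>d\<in>Dsat. val V D y \<phi> d) = (\<Sum>d\<in>Dsat. sum y {x. x \<in> ?S \<and> \<phi> x = d})"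
    proof (rule sum.cong[OF refl])
      fix d assume "d \<in> Dsat"
      then have "{U \<in> Usep V D y. \<phi> U = d} = {x. x \<in> ?S \<and> \<phi> x = d}" by auto
      then show "val V D y \<phi> d = sum y {x. x \<in> ?S \<and> \<phi> x = d}" unfolding val_def by simp
    qed
    also have "\<dots> = sum y ?S" by (rule sum.group[OF fS fD]) auto
    also have "\<dots> = (\<Sum>U\<in>?P. if U \<in> Usep V D y \<and> \<phi> U \<in> Dsat then y U else 0)"
    proof -
      have e: "?S = {U\<in>?P. U \<in> Usep V D y \<and> \<phi> U \<in> Dsat}" using US by blast
      have "sum y ?S = sum y {U\<in>?P. U \<in> Usep V D y \<and> \<phi> U \<in> Dsat}" by (subst e) (rule refl)
      also have "\<dots> = (\<Sum>U\<in>?P. if U \<in> Usep V D y \<and> \<phi> U \<in> Dsat then y U else 0)" by (rule sum.inter_filter[OF fP])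
      finally show ?thesis .
    qed
    finally show ?thesis .
  qed
  have NXO: "\<And>U. Ncr Xs U \<le> Ncr OPT U"
    unfolding Ncr_def using XO fO by (intro card_mono) auto
  have pU: "y U * real (Ncr Xs U) \<le> (if U \<in> Usep V D y \<and> \<phi> U \<in> Dsat then y U else 0)
      + 2 * (y U * real (Ncr OPT U)) - 2 * (if U \<in> Usep V D y then y U else 0)" for U
    by (rule perU[OF yn NXO lb cr])
  have "(\<Sum>U\<in>?P. y U * real (Ncr Xs U)) \<le> (\<Sum>U\<in>?P. (if U \<in> Usep V D y \<and> \<phi> U \<in> Dsat then y U else 0)
      + 2 * (y U * real (Ncr OPT U)) - 2 * (if U \<in> Usep V D y then y U else 0))"
    by (rule sum_mono) (rule pU)
  also have "\<dots> = (\<Sum>d\<in>Dsat. val V D y \<phi> d) + 2 * (\<Sum>U\<in>?P. y U * real (Ncr OPT U)) - 2 * (\<Sum>U\<in>Usep V D y. y U)"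
    unfolding Vsum Usum by (simp add: sum.distrib sum_subtractf sum_distrib_left)
  finally have main: "(\<Sum>U\<in>?P. y U * real (Ncr Xs U)) \<le> (\<Sum>d\<in>Dsat. val V D y \<phi> d) + 2 * (\<Sum>U\<in>?P. y U * real (Ncr OPT U)) - 2 * (\<Sum>U\<in>Usep V D y. y U)" .
  show ?thesis unfolding excess_def cX cO using main slXO slO by simp
qed

lemma sep_pair:
  assumes "card d = 2" "separates U d"
  shows "\<exists>a b. d = {a, b} \<and> a \<in> U \<and> b \<notin> U"
proof -
  obtain a where a: "a \<in> d" "a \<in> U" using assms(2) unfolding separates_def by blast
  obtain b where b: "b \<in> d" "b \<notin> U" using assms(2) unfolding separates_def by blast
  have ab: "a \<noteq> b" using a b by blast
  have fd: "finite d" using assms(1) card.infinite by fastforce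
  have sub: "{a, b} \<subseteq> d" using a b by simp
  have "card {a, b} = 2" using ab by simp
  then have "{a, b} = d" using card_seteq[OF fd sub] assms(1) by simp
  then show ?thesis using a b by blast
qed

lemma in_delta_cross: "x \<in> U \<Longrightarrow> y \<notin> U \<Longrightarrow> in_delta U {x, y}"
proof -
  assume "x \<in> U" "y \<notin> U"
  then have "{x, y} \<inter> U = {x}" by auto
  then show ?thesis unfolding in_delta_def by simp
qed

lemma in_delta_pair:
  assumes "in_delta U {p, q}" and pq: "p \<noteq> q"
  shows "(p \<in> U \<and> q \<notin> U) \<or> (q \<in> U \<and> p \<notin> U)"
proof (rule ccontr)
  assume n: "\<not> ?thesis"
  show False
  proof (cases "p \<in> U")
    case True
    then have "q \<in> U" using n by blast
    then have "{p, q} \<inter> U = {p, q}" using True by auto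
    then have "card ({p, q} \<inter> U) = 2" using pq by simp
    then show False using assms(1) unfolding in_delta_def by simp
  next
    case False
    then have "q \<notin> U" using n by blast
    then have "{p, q} \<inter> U = {}" using False by auto
    then show False using assms unfolding in_delta_def by simp
  qed
qed

lemma rtrancl_sym_class:
  assumes "sym r" "(x, z) \<in> r\<^sup>*"
  shows "r\<^sup>* `` {x} = r\<^sup>* `` {z}"
proof -
  have s: "sym (r\<^sup>*)" using sym_rtrancl[OF assms(1)] .
  have zx: "(z, x) \<in> r\<^sup>*" using s assms(2) unfolding sym_def by blast
  show ?thesis
  proof
    show "r\<^sup>* `` {x} \<subseteq> r\<^sup>* `` {z}" using zx by (auto intro: rtrancl_trans)
    show "r\<^sup>* `` {z} \<subseteq> r\<^sup>* `` {x}" using assms(2) by (auto intro: rtrancl_trans)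
  qed
qed

lemma merge_rel_sym: "sym (merge_rel V D y OPT)"
  unfolding sym_def merge_rel_def by blast

lemma merge_rel_sub: "(T1, T2) \<in> merge_rel V D y OPT \<Longrightarrow> T2 \<in> comps V OPT"
  unfolding merge_rel_def by blast

lemma forest_elim:
  assumes "Fo \<in> forests V D y OPT"
  obtains T1 where "T1 \<in> comps V OPT" "Fo = (merge_rel V D y OPT)\<^sup>* `` {T1}"
  using assms unfolding forests_def quotient_def by blast

lemma forest_mem:
  assumes Fo: "Fo \<in> forests V D y OPT" and T: "T \<in> Fo"
  shows "T \<in> comps V OPT"
proof -
  obtain T1 where T1: "T1 \<in> comps V OPT" "Fo = (merge_rel V D y OPT)\<^sup>* `` {T1}"
    using forest_elim[OF Fo] by blast
  have "(T1, T) \<in> (merge_rel V D y OPT)\<^sup>*" using T T1(2) by simp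
  then show ?thesis
  proof (cases rule: rtranclE)
    case base then show ?thesis using T1(1) by simp
  next
    case (step z) then show ?thesis using merge_rel_sub by blast
  qed
qed

lemma forest_unique:
  assumes Fo: "Fo \<in> forests V D y OPT" and Fo': "Fo' \<in> forests V D y OPT"
    and T: "T \<in> Fo" "T \<in> Fo'"
  shows "Fo = Fo'"
proof -
  obtain T1 where T1: "Fo = (merge_rel V D y OPT)\<^sup>* `` {T1}" using forest_elim[OF Fo] by blast
  obtain T2 where T2: "Fo' = (merge_rel V D y OPT)\<^sup>* `` {T2}" using forest_elim[OF Fo'] by blast
  have "(T1, T) \<in> (merge_rel V D y OPT)\<^sup>*" using T(1) T1 by simp
  then have 1: "Fo = (merge_rel V D y OPT)\<^sup>* `` {T}"
    using rtrancl_sym_class[OF merge_rel_sym] T1 by metis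
  have "(T2, T) \<in> (merge_rel V D y OPT)\<^sup>*" using T(2) T2 by simp
  then have 2: "Fo' = (merge_rel V D y OPT)\<^sup>* `` {T}"
    using rtrancl_sym_class[OF merge_rel_sym] T2 by metis
  show ?thesis using 1 2 by simp
qed

lemma canonE:
  assumes "p \<in> canon V D R OPT r"
  shows "\<exists>Fo\<in>forests V D (yfin R) OPT. snd p \<in> Fo \<and> fst p = {v \<in> snd p. act_conn V D R v (r Fo)} \<and> fst p \<noteq> {}"
proof -
  obtain S T where p: "p = (S, T)" by (cases p)
  have "(S, T) \<in> canon V D R OPT r" using assms p by simp
  then have "\<exists>Fo\<in>forests V D (yfin R) OPT. T \<in> Fo \<and> S = {v \<in> T. act_conn V D R v (r Fo)} \<and> S \<noteq> {}"
    unfolding canon_def by simp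
  then show ?thesis using p by simp
qed

theorem lemma6p4:
  fixes V :: "'v set" and E D OPT :: "'v set set" and c :: "'v set \<Rightarrow> real"
    and \<epsilon> :: real and R :: "'v state list"
    and \<phi> :: "'v set \<Rightarrow> 'v set" and r :: "'v set set \<Rightarrow> 'v"
  assumes inst: "sf_instance V E c D"
    and opt: "min_opt V E c D OPT"
    and eps: "\<epsilon> \<ge> 0"
    and run: "moat_run V E c D \<epsilon> R"
    and phi: "\<forall>U\<in>Usep V D (yfin R). \<phi> U \<in> D \<and> separates U (\<phi> U)"
    and root: "\<forall>Fo\<in>forests V D (yfin R) OPT. r Fo \<in> \<Union>Fo \<and>
                 (\<forall>v\<in>\<Union>Fo. tau V D R v \<le> tau V D R (r Fo))"
  shows "(\<Sum>(S, T)\<in>canon V D R OPT r. cost c (min_subtree OPT T S))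
           \<le> val_coll V D (yfin R) \<phi> (fst ` canon V D R OPT r)
              + 2 * excess V D c (yfin R) OPT"
proof -
  interpret runctx V E c D \<epsilon> R using inst run by unfold_locales
  define CA where "CA = canon V D R OPT r"
  define X where "X p = min_subtree OPT (snd p) (fst p)" for p :: "'v set \<times> 'v set"
  define y where "y = yfin R"
  have fV: "finite V" using inst by (simp add: sf_instance_def)
  have OE: "OPT \<subseteq> E" using opt by (simp add: min_opt_def)
  have ev: "\<And>e. e \<in> OPT \<Longrightarrow> e \<subseteq> V \<and> card e = 2" using OE inst unfolding sf_instance_def by blast
  have "OPT \<subseteq> Pow V" using ev by blast
  then have fO: "finite OPT" using fV by (simp add: finite_subset)
  have feas: "feasible V D OPT" using opt by (simp add: min_opt_def)
  have cE: "\<exists>Fo\<in>forests V D y OPT. snd p \<in> Fo \<and> fst p = {v \<in> snd p. act_conn V D R v (r Fo)} \<and> fst p \<noteq> {}"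
    if "p \<in> CA" for p using canonE[of p V D R OPT r] that unfolding CA_def y_def by simp
  have CT: "snd p \<in> comps V OPT \<and> fst p \<subseteq> snd p" if pC: "p \<in> CA" for p
  proof -
    obtain Fo where Fo: "Fo \<in> forests V D y OPT" "snd p \<in> Fo" "fst p = {v \<in> snd p. act_conn V D R v (r Fo)}"
      using cE[OF pC] by blast
    have "snd p \<in> comps V OPT" using forest_mem[OF Fo(1,2)] .
    moreover have "fst p \<subseteq> snd p" using Fo(3) by auto
    ultimately show ?thesis by simp
  qed
  have Xp: "minimal_conn {e\<in>OPT. e \<subseteq> snd p} (X p) (fst p)" if "p \<in> CA" for p
    unfolding X_def using min_subtree_props[OF opt inst] CT[OF that] by blast
  have inj: "p = p'" if pp: "p \<in> CA" "p' \<in> CA" "snd p = snd p'" for p p'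
  proof -
    obtain Fo where Fo: "Fo \<in> forests V D y OPT" "snd p \<in> Fo" "fst p = {v \<in> snd p. act_conn V D R v (r Fo)}"
      using cE[OF pp(1)] by blast
    obtain Fo' where Fo': "Fo' \<in> forests V D y OPT" "snd p' \<in> Fo'" "fst p' = {v \<in> snd p'. act_conn V D R v (r Fo')}"
      using cE[OF pp(2)] by blast
    have "Fo = Fo'" using forest_unique[OF Fo(1) Fo'(1) Fo(2)] Fo'(2) pp(3) by simp
    then have "fst p = fst p'" using Fo(3) Fo'(3) pp(3) by simp
    then show ?thesis using pp(3) by (simp add: prod_eq_iff)
  qed
  have Xsub: "X p \<subseteq> {e\<in>OPT. e \<subseteq> snd p}" if "p \<in> CA" for p
    using Xp[OF that] unfolding minimal_conn_def by blast
  have disj: "\<forall>p\<in>CA. \<forall>p'\<in>CA. p \<noteq> p' \<longrightarrow> X p \<inter> X p' = {}"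
  proof (intro ballI impI)
    fix p p' assume p: "p \<in> CA" and p': "p' \<in> CA" and ne: "p \<noteq> p'"
    show "X p \<inter> X p' = {}"
    proof (rule ccontr)
      assume "X p \<inter> X p' \<noteq> {}"
      then obtain e where e: "e \<in> X p" "e \<in> X p'" by blast
      have e1: "e \<in> OPT" "e \<subseteq> snd p" using Xsub[OF p] e(1) by blast+
      have e2: "e \<subseteq> snd p'" using Xsub[OF p'] e(2) by blast
      have "card e = 2" using ev e1(1) by blast
      then have "e \<noteq> {}" by auto
      then obtain v where v: "v \<in> e" by blast
      have "snd p = snd p'" using comps_eq[of "snd p" V OPT "snd p'" v] CT[OF p] CT[OF p'] v e1(2) e2 by blast
      then show False using inj[OF p p'] ne by simp
    qed
  qed
  have fCA: "finite CA"
  proof -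
    have "CA \<subseteq> Pow V \<times> Pow V"
    proof
      fix p assume p: "p \<in> CA"
      have "snd p \<subseteq> V" using comps_sub CT[OF p] by blast
      moreover have "fst p \<subseteq> V" using CT[OF p] calculation by blast
      ultimately show "p \<in> Pow V \<times> Pow V" by (simp add: mem_Times_iff)
    qed
    then show ?thesis using fV by (simp add: finite_subset)
  qed
  define Xs where "Xs = \<Union>(X ` CA)"
  have XsO: "Xs \<subseteq> OPT" unfolding Xs_def using Xsub by blast
  have fXp: "\<forall>p\<in>CA. finite (X p)" using Xsub fO finite_subset by (metis (no_types, lifting) mem_Collect_eq subsetI)
  have LHS: "(\<Sum>(S, T)\<in>CA. cost c (min_subtree OPT T S)) = cost c Xs"
  proof -
    have "(\<Sum>(S, T)\<in>CA. cost c (min_subtree OPT T S)) = (\<Sum>p\<in>CA. sum c (X p))"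
      unfolding X_def cost_def by (simp add: split_def)
    also have "\<dots> = sum c Xs" unfolding Xs_def by (rule sum.UNION_disjoint[OF fCA fXp disj, symmetric])
    finally show ?thesis unfolding cost_def .
  qed
  define Dsat where "Dsat = {d\<in>D. \<exists>S\<in>fst ` CA. d \<subseteq> S}"
  have fD: "finite Dsat"
  proof -
    have "Dsat \<subseteq> Pow V" unfolding Dsat_def using D_sub by blast
    then show ?thesis using fV by (simp add: finite_subset)
  qed
  have VC: "val_coll V D y \<phi> (fst ` CA) = (\<Sum>d\<in>Dsat. val V D y \<phi> d)"
    unfolding val_coll_def Dsat_def by simp
  have ld: "load V y e \<le> c e" if "e \<in> OPT" for e using yfin_load OE that unfolding y_def by blast
  have yn: "0 \<le> y U" for U unfolding y_def by (rule yfin_nonneg)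
  have connOPT: "conn OPT a b" if ab: "{a, b} \<in> D" for a b
  proof -
    have "\<exists>C\<in>comps V OPT. {a, b} \<subseteq> C" using feas ab unfolding feasible_def by blast
    then obtain C where C: "C \<in> comps V OPT" "{a, b} \<subseteq> C" by blast
    show ?thesis using comp_conn[OF C(1)] C(2) by simp
  qed
  have lb: "1 \<le> Ncr OPT U" if U: "U \<in> Usep V D y" for U
  proof -
    obtain d where d: "d \<in> D" "separates U d" using U unfolding Usep_def by blast
    have "card d = 2" using inst d(1) unfolding sf_instance_def by blast
    then obtain a b where ab: "d = {a, b}" "a \<in> U" "b \<notin> U" using sep_pair d(2) by blast
    have "conn OPT a b" using connOPT d(1) ab(1) by simp
    then obtain x x' where xx: "{x, x'} \<in> OPT" "x \<in> U" "x' \<notin> U" using conn_cross ab(2,3) by metis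
    have "{x, x'} \<in> {e\<in>OPT. in_delta U e}" using xx in_delta_cross by simp
    moreover have "finite {e\<in>OPT. in_delta U e}" using fO by simp
    ultimately have "card {e\<in>OPT. in_delta U e} > 0" using card_gt_0_iff by blast
    then show ?thesis unfolding Ncr_def by simp
  qed
  have cr: "\<phi> U \<in> Dsat" if U: "U \<in> Usep V D y" and n1: "Ncr OPT U = 1" and nx: "1 \<le> Ncr Xs U" for U
  proof -
    have "{e\<in>Xs. in_delta U e} \<noteq> {}" using nx unfolding Ncr_def by (cases "{e\<in>Xs. in_delta U e} = {}") auto
    then obtain e where e: "e \<in> Xs" "in_delta U e" by blast
    have eO: "e \<in> OPT" using e(1) XsO by blast
    have c1: "card {e\<in>OPT. in_delta U e} = 1" using n1 unfolding Ncr_def .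
    then obtain e0 where e0: "{e\<in>OPT. in_delta U e} = {e0}" by (rule card_1_singletonE)
    have uniq: "e' = e" if e': "e' \<in> OPT" "in_delta U e'" for e'
    proof -
      have "e \<in> {e\<in>OPT. in_delta U e}" using eO e(2) by simp
      then have "e = e0" using e0 by simp
      moreover have "e' \<in> {e\<in>OPT. in_delta U e}" using e' by simp
      then have "e' = e0" using e0 by simp
      ultimately show ?thesis by simp
    qed
    obtain p where p: "p \<in> CA" "e \<in> X p" using e(1) unfolding Xs_def by blast
    define S where "S = fst p"
    define T where "T = snd p"
    obtain Fo where Fo: "Fo \<in> forests V D y OPT" "T \<in> Fo" "S = {v \<in> T. act_conn V D R v (r Fo)}"
      using cE[OF p(1)] unfolding S_def T_def by blast
    have TC: "T \<in> comps V OPT" "S \<subseteq> T" using CT[OF p(1)] unfolding S_def T_def by simp_all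
    have TV: "T \<subseteq> V" using comps_sub[OF TC(1)] .
    have mc: "minimal_conn {e\<in>OPT. e \<subseteq> T} (X p) S" using Xp[OF p(1)] unfolding S_def T_def by simp
    have XpO: "X p \<subseteq> OPT" and XpT: "\<forall>e\<in>X p. e \<subseteq> T" and cX: "connects (X p) S"
      and mX: "\<And>X'. X' \<subset> X p \<Longrightarrow> \<not> connects X' S" using mc unfolding minimal_conn_def by auto
    have "card e = 2" using ev eO by blast
    then obtain p0 q0 where pq0: "p0 \<noteq> q0" "e = {p0, q0}" using card2_edge by blast
    have or: "(p0 \<in> U \<and> q0 \<notin> U) \<or> (q0 \<in> U \<and> p0 \<notin> U)" using in_delta_pair[of U p0 q0] e(2) pq0 by simp
    obtain pp qq where pq: "e = {pp, qq}" "pp \<in> U" "qq \<notin> U"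
    proof (cases "p0 \<in> U \<and> q0 \<notin> U")
      case True then show ?thesis using that[of p0 q0] pq0 by simp
    next
      case False
      then have "q0 \<in> U \<and> p0 \<notin> U" using or by blast
      moreover have "e = {q0, p0}" using pq0 by (simp add: insert_commute)
      ultimately show ?thesis using that[of q0 p0] by simp
    qed
    have "X p - {e} \<subset> X p" using p(2) by blast
    then have "\<not> connects (X p - {e}) S" by (rule mX)
    then obtain s1 s2 where s: "s1 \<in> S" "s2 \<in> S" "\<not> conn (X p - {e}) s1 s2" unfolding connects_def by blast
    have c12: "conn (X p) s1 s2" using cX s(1,2) unfolding connects_def by blast
    have crs: "x' \<in> U" if xx: "{x, x'} \<in> X p - {{pp, qq}}" "x \<in> U" for x x'
    proof (rule ccontr)
      assume "x' \<notin> U"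
      then have "in_delta U {x, x'}" using in_delta_cross[OF xx(2)] by simp
      moreover have "{x, x'} \<in> OPT" using xx(1) XpO by blast
      ultimately have "{x, x'} = e" using uniq by simp
      then show False using xx(1) pq(1) by simp
    qed
    have diff: "\<not> (s1 \<in> U \<longleftrightarrow> s2 \<in> U)"
    proof
      assume side: "s1 \<in> U \<longleftrightarrow> s2 \<in> U"
      have "conn (X p - {{pp, qq}}) s1 s2" using conn_remove_bridge[OF c12 pq(2) pq(3) crs side] .
      then show False using s(3) pq(1) by simp
    qed
    obtain sin sout where so: "sin \<in> S" "sin \<in> U" "sout \<in> S" "sout \<notin> U"
    proof (cases "s1 \<in> U")
      case True then show ?thesis using that[of s1 s2] diff s(1,2) by simp
    next
      case False then show ?thesis using that[of s2 s1] diff s(1,2) by simp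
    qed
    have phU: "\<phi> U \<in> D" "separates U (\<phi> U)" using phi U unfolding y_def by blast+
    have "card (\<phi> U) = 2" using inst phU(1) unfolding sf_instance_def by blast
    then obtain a b where ab: "\<phi> U = {a, b}" "a \<in> U" "b \<notin> U" using sep_pair phU(2) by blast
    have dab: "{a, b} \<in> D" using phU(1) ab(1) by simp
    have "y U \<noteq> 0" using U unfolding Usep_def by blast
    then have "yfin R U \<noteq> 0" unfolding y_def .
    then obtain i where i: "Suc i < length R" "grow_step V E c D \<epsilon> (R ! i) (R ! Suc i)" "U \<in> comps V (sF (R ! i))"
      using yfin_support by blast
    have sV: "sout \<in> V" using so(3) TC(2) TV by blast
    have act: "act_conn V D R s (r Fo)" if "s \<in> S" for s using that Fo(3) by blast
    have ar: "act_conn V D R a (r Fo) \<and> act_conn V D R b (r Fo)"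
      by (rule crux[OF i(1) i(2) i(3) ab(2) ab(3) dab so(2) sV so(4) act[OF so(1)] act[OF so(3)]])
    have cab: "conn OPT a b" using connOPT dab .
    obtain x x' where xx: "{x, x'} \<in> OPT" "x \<in> U" "x' \<notin> U" "conn OPT a x"
      using conn_cross[OF cab ab(2) ab(3)] by blast
    have "{x, x'} = e" using uniq xx(1) in_delta_cross[OF xx(2,3)] by simp
    then have xpp: "x = pp" using pq xx(2,3) by (auto simp: doubleton_eq_iff)
    have ppT: "pp \<in> T" using XpT p(2) pq(1) by blast
    have aV: "a \<in> V" and bV: "b \<in> V" using D_sub[OF dab] by auto
    have "conn OPT pp a" using conn_sym[OF xx(4)] xpp by simp
    then have aT: "a \<in> T" using comp_closed[OF TC(1) ppT aV] by simp
    have bT: "b \<in> T" using comp_closed[OF TC(1) aT bV cab] .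
    have "a \<in> S" "b \<in> S" using Fo(3) aT bT ar by simp_all
    then have "\<phi> U \<subseteq> S" using ab(1) by simp
    moreover have "S \<in> fst ` CA" using p(1) unfolding S_def by simp
    ultimately show "\<phi> U \<in> Dsat" unfolding Dsat_def using phU(1) by blast
  qed
  have "cost c Xs \<le> (\<Sum>d\<in>Dsat. val V D y \<phi> d) + 2 * excess V D c y OPT"
    by (rule algebra_main[OF fV XsO fO ld yn fD lb cr])
  then show ?thesis using LHS VC unfolding CA_def y_def by simp
qed

end
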